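(* Assume $N_k=N>0$ for all $k\in[n]$ and $F\ge nN$. Let $\boldsymbol O^*\in\mathbb R^{\mathcal N}$ be given by $O^*_{\mathcal N}=N/2$ and $O^*_i=0$ for $i<\mathcal N$ (i.e. the whole group $[n]$ uniquely shares $N/2$ points and no other subgroup shares any). Then $\boldsymbol O^*\in\Omega$ and $\boldsymbol O^*$ is a global maximiser of $T$ over $\Omega$, i.e. $T(\boldsymbol O)\le T(\boldsymbol O^* )$ for all $\boldsymbol O\in\Omega$.
   Context: Fix an integer $n\ge2$ and write $[m]=\{1,\dots,m\}$. Let $\mathcal X$ be the collection of subsets of $[n]$ with at least two elements, $\mathcal N=2^n-n-1$, and let $I:\mathcal X\to[\mathcal N]$ be a bijection such that $A\subsetneq B$ implies $I(A)<I(B)$ (so $I([n])=\mathcal N$). Write $f(c)=|I^{-1}(c)|$, $S(c)=\{i\in[\mathcal N]:I^{-1}(c)\subseteq I^{-1}(i)\}$, $B(c)=\{i\in[\mathcal N]:I^{-1}(i)\subsetneq I^{-1}(c)\}$, and for $k\in[n]$, $\tilde S(k)=\{i\in[\mathcal N]:k\in I^{-1}(i)\}$. With effective knowledges $N_k'=\min\{N_k,F\}$ (here all equal to $N$), the objective is $$T(\boldsymbol O)=\sum_{c=1}^{\mathcal N}\frac{\sum_{a\in S(c)}O_a}{\prod_{k\in I^{-1}(c)}N_k'}\Big(\sum_{k\in I^{-1}(c)}N_k'-f(c)\sum_{a\in S(c)}O_a-(f(c)-1)\sum_{a\in B(c)}O_a\Big).$$ The (relaxed, real-valued) feasible region is $\Omega=\{\boldsymbol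 O\in\mathbb R^{\mathcal N}:\boldsymbol O\ge\boldsymbol 0,\ \sum_{i\in\tilde S(k)}O_i\le N_k'\ \forall k\in[n],\ \sum_{k=1}^nN_k'-\sum_{c=1}^{\mathcal N}(f(c)-1)O_c\le F\}$; under the stated assumptions this is $\{\boldsymbol O\ge\boldsymbol 0:\sum_{i\in\tilde S(k)}O_i\le N\ \forall k\}$. *)

theory Defs
  imports Complex_Main
begin

definition Xsets :: "nat \<Rightarrow> nat set set" where
  "Xsets n = {A. A \<subseteq> {1..n} \<and> 2 \<le> card A}"

definition calN :: "nat \<Rightarrow> nat" where
  "calN n = 2 ^ n - n - 1"

definition valid_index :: "nat \<Rightarrow> (nat set \<Rightarrow> nat) \<Rightarrow> bool" where
  "valid_index n I \<longleftrightarrow> bij_betw I (Xsets n) {1..calN n} \<and>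
     (\<forall>A\<in>Xsets n. \<forall>B\<in>Xsets n. A \<subset> B \<longrightarrow> I A < I B)"

definition Iinv :: "nat \<Rightarrow> (nat set \<Rightarrow> nat) \<Rightarrow> nat \<Rightarrow> nat set" where
  "Iinv n I c = inv_into (Xsets n) I c"

definition fsz :: "nat \<Rightarrow> (nat set \<Rightarrow> nat) \<Rightarrow> nat \<Rightarrow> nat" where
  "fsz n I c = card (Iinv n I c)"

definition Ssup :: "nat \<Rightarrow> (nat set \<Rightarrow> nat) \<Rightarrow> nat \<Rightarrow> nat set" where
  "Ssup n I c = {i \<in> {1..calN n}. Iinv n I c \<subseteq> Iinv n I i}"

definition Bsub :: "nat \<Rightarrow> (nat set \<Rightarrow> nat) \<Rightarrow> nat \<Rightarrow> nat set" where
  "Bsub n I c = {i \<in> {1..calN n}. Iinv n I i \<subset> Iinv n I c}"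

definition Stilde :: "nat \<Rightarrow> (nat set \<Rightarrow> nat) \<Rightarrow> nat \<Rightarrow> nat set" where
  "Stilde n I k = {i \<in> {1..calN n}. k \<in> Iinv n I i}"

definition Neff :: "(nat \<Rightarrow> real) \<Rightarrow> real \<Rightarrow> nat \<Rightarrow> real" where
  "Neff Nk F k = min (Nk k) F"

definition Tobj :: "nat \<Rightarrow> (nat set \<Rightarrow> nat) \<Rightarrow> (nat \<Rightarrow> real) \<Rightarrow> real \<Rightarrow> (nat \<Rightarrow> real) \<Rightarrow> real" where
  "Tobj n I Nk F Ov =
    (\<Sum>c = 1..calN n.
       (\<Sum>a\<in>Ssup n I c. Ov a) / (\<Prod>k\<in>Iinv n I c. Neff Nk F k) *
       ((\<Sum>k\<in>Iinv n I c. Neff Nk F k)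
        - real (fsz n I c) * (\<Sum>a\<in>Ssup n I c. Ov a)
        - (real (fsz n I c) - 1) * (\<Sum>a\<in>Bsub n I c. Ov a)))"

text \<open>Feasible region Omega (vectors indexed by 1..calN n; values outside are irrelevant).\<close>
definition Omega :: "nat \<Rightarrow> (nat set \<Rightarrow> nat) \<Rightarrow> (nat \<Rightarrow> real) \<Rightarrow> real \<Rightarrow> (nat \<Rightarrow> real) set" where
  "Omega n I Nk F = {Ov.
     (\<forall>i\<in>{1..calN n}. 0 \<le> Ov i) \<and>
     (\<forall>k\<in>{1..n}. (\<Sum>i\<in>Stilde n I k. Ov i) \<le> Neff Nk F k) \<and>
     (\<Sum>k = 1..n. Neff Nk F k) - (\<Sum>c = 1..calN n. (real (fsz n I c) - 1) * Ov c) \<le> F}"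

end

theory Submission
  imports Defs
begin

lemma term_bound:
  fixes s b f N P :: real
  assumes "0 \<le> s" "0 \<le> b" "1 \<le> f" "0 < P"
  shows "s / P * (f * N - f * s - (f - 1) * b) \<le> (N/2) / P * (f * N - f * (N/2) - (f - 1) * 0)"
proof -
  have "s * (f * N - f * s - (f - 1) * b) \<le> (N/2) * (f * N - f * (N/2) - (f - 1) * 0)"
  proof -
    have h1: "s * ((f - 1) * b) \<ge> 0" using assms by simp
    have h2: "f * ((s - N/2)^2) \<ge> 0" using assms by simp
    have "s * (f * N - f * s - (f - 1) * b) = f * (N/2)^2 - f * ((s - N/2)^2) - s * ((f - 1) * b)"
      by (simp add: algebra_simps power2_eq_square)
    also have "\<dots> \<le> f * (N/2)^2" using h1 h2 by linarith
    also have "\<dots> = (N/2) * (f * N - f * (N/2) - (f - 1) * 0)"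
      by (simp add: algebra_simps power2_eq_square)
    finally show ?thesis .
  qed
  then have "s * (f * N - f * s - (f - 1) * b) / P \<le> (N/2) * (f * N - f * (N/2) - (f - 1) * 0) / P"
    using assms(4) by (intro divide_right_mono) auto
  then show ?thesis by simp
qed

theorem mainTheorem5:
  fixes n :: nat and I :: "nat set \<Rightarrow> nat" and N F :: real
  assumes "2 \<le> n"
    and "valid_index n I"
    and "0 < N"
    and "real n * N \<le> F"
  defines "Ostar \<equiv> (\<lambda>i. if i = calN n then N / 2 else 0)"
  shows "Ostar \<in> Omega n I (\<lambda>_. N) F \<and>
         (\<forall>Ov\<in>Omega n I (\<lambda>_. N) F. Tobj n I (\<lambda>_. N) F Ov \<le> Tobj n I (\<lambda>_. N) F Ostar)"
proof -
  have bij: "bij_betw I (Xsets n) {1..calN n}" and mono: "\<And>A B. A \<in> Xsets n \<Longrightarrow> B \<in> Xsets n \<Longrightarrow> A \<subset> B \<Longrightarrow> I A < I B"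
    using assms(2) unfolding valid_index_def by auto
  have Neff: "Neff (\<lambda>_. N) F k = N" for k
  proof -
    have "real n * N \<ge> 2 * N" using assms(1,3) by (simp add: mult_right_mono)
    then have "N \<le> F" using assms(3,4) by linarith
    then show ?thesis unfolding Neff_def by simp
  qed
  have full: "{1..n} \<in> Xsets n" using assms(1) unfolding Xsets_def by simp
  have Iin: "\<And>c. c \<in> {1..calN n} \<Longrightarrow> Iinv n I c \<in> Xsets n \<and> I (Iinv n I c) = c"
    unfolding Iinv_def using bij
    by (metis bij_betw_def f_inv_into_f inv_into_into)
  have Ifull: "I {1..n} \<in> {1..calN n}" using bij full bij_betwE by blast
  hence cpos: "calN n \<in> {1..calN n}" by auto
  have top: "Iinv n I (calN n) = {1..n}"
  proof (rule ccontr)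
    assume ne: "Iinv n I (calN n) \<noteq> {1..n}"
    have B: "Iinv n I (calN n) \<in> Xsets n" "I (Iinv n I (calN n)) = calN n" using Iin[OF cpos] by auto
    hence "Iinv n I (calN n) \<subset> {1..n}" using ne unfolding Xsets_def by auto
    hence "I (Iinv n I (calN n)) < I {1..n}" using mono B full by blast
    thus False using B Ifull by auto
  qed
  have sub: "\<And>c. c \<in> {1..calN n} \<Longrightarrow> Iinv n I c \<subseteq> {1..n}" using Iin unfolding Xsets_def by auto
  have fge: "\<And>c. c \<in> {1..calN n} \<Longrightarrow> 2 \<le> fsz n I c" using Iin unfolding Xsets_def fsz_def by auto
  have fin: "\<And>c. finite (Ssup n I c)" "\<And>c. finite (Bsub n I c)" "\<And>k. finite (Stilde n I k)"
    unfolding Ssup_def Bsub_def Stilde_def by auto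
  have sumO: "\<And>S. finite S \<Longrightarrow> (\<Sum>i\<in>S. Ostar i) = (if calN n \<in> S then N/2 else 0)"
    unfolding Ostar_def by (simp add: sum.delta)
  have inS: "\<And>c. c \<in> {1..calN n} \<Longrightarrow> calN n \<in> Ssup n I c"
    unfolding Ssup_def using cpos top sub by auto
  have notB: "\<And>c. c \<in> {1..calN n} \<Longrightarrow> calN n \<notin> Bsub n I c"
    unfolding Bsub_def using top sub by auto
  have mem: "Ostar \<in> Omega n I (\<lambda>_. N) F"
    unfolding Omega_def
  proof (intro CollectI conjI ballI)
    fix i assume "i \<in> {1..calN n}" thus "0 \<le> Ostar i" using assms(3) unfolding Ostar_def by simp
  next
    fix k assume "k \<in> {1..n}"
    show "(\<Sum>i\<in>Stilde n I k. Ostar i) \<le> Neff (\<lambda>_. N) F k"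
      using sumO[OF fin(3)] Neff assms(3) by simp
  next
    have "(\<Sum>c = 1..calN n. (real (fsz n I c) - 1) * Ostar c) \<ge> 0"
    proof (rule sum_nonneg)
      fix c assume c: "c \<in> {1..calN n}"
      have "1 \<le> real (fsz n I c)" using fge[OF c] by simp
      then show "0 \<le> (real (fsz n I c) - 1) * Ostar c" using assms(3) unfolding Ostar_def by simp
    qed
    moreover have "(\<Sum>k = 1..n. Neff (\<lambda>_. N) F k) = real n * N" using Neff by simp
    ultimately show "(\<Sum>k = 1..n. Neff (\<lambda>_. N) F k) - (\<Sum>c = 1..calN n. (real (fsz n I c) - 1) * Ostar c) \<le> F"
      using assms(4) by linarith
  qed
  have opt: "Tobj n I (\<lambda>_. N) F Ov \<le> Tobj n I (\<lambda>_. N) F Ostar" if Ov: "Ov \<in> Omega n I (\<lambda>_. N) F" for Ov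
    unfolding Tobj_def
  proof (rule sum_mono)
    fix c assume c: "c \<in> {1..calN n}"
    have nn: "\<And>i. i \<in> {1..calN n} \<Longrightarrow> 0 \<le> Ov i" using Ov unfolding Omega_def by auto
    have s0: "0 \<le> (\<Sum>a\<in>Ssup n I c. Ov a)" by (rule sum_nonneg) (use nn in \<open>auto simp: Ssup_def\<close>)
    have b0: "0 \<le> (\<Sum>a\<in>Bsub n I c. Ov a)" by (rule sum_nonneg) (use nn in \<open>auto simp: Bsub_def\<close>)
    have f1: "1 \<le> real (fsz n I c)" using fge[OF c] by simp
    have P: "0 < (\<Prod>k\<in>Iinv n I c. Neff (\<lambda>_. N) F k)" using Neff assms(3) by (simp add: prod_pos)
    have sk: "(\<Sum>k\<in>Iinv n I c. Neff (\<lambda>_. N) F k) = real (fsz n I c) * N"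
      using Neff by (simp add: fsz_def)
    have eS: "(\<Sum>a\<in>Ssup n I c. Ostar a) = N/2" using sumO[OF fin(1)] inS[OF c] by simp
    have eB: "(\<Sum>a\<in>Bsub n I c. Ostar a) = 0" using sumO[OF fin(2)] notB[OF c] by simp
    show "(\<Sum>a\<in>Ssup n I c. Ov a) / (\<Prod>k\<in>Iinv n I c. Neff (\<lambda>_. N) F k) *
         ((\<Sum>k\<in>Iinv n I c. Neff (\<lambda>_. N) F k) - real (fsz n I c) * (\<Sum>a\<in>Ssup n I c. Ov a) -
          (real (fsz n I c) - 1) * (\<Sum>a\<in>Bsub n I c. Ov a))
         \<le> (\<Sum>a\<in>Ssup n I c. Ostar a) / (\<Prod>k\<in>Iinv n I c. Neff (\<lambda>_. N) F k) *
         ((\<Sum>k\<in>Iinv n I c. Neff (\<lambda>_. N) F k) - real (fsz n I c) * (\<Sum>a\<in>Ssup n I c. Ostar a) -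
          (real (fsz n I c) - 1) * (\<Sum>a\<in>Bsub n I c. Ostar a))"
      unfolding eS eB sk
      using term_bound[OF s0 b0 f1 P, of N] by (simp add: mult.commute)
  qed
  show ?thesis using mem opt by blast
qed

end
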